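(* Let $\mathcal{A}=\{0,1\}$, contexts $X$ with density $p(x)$, real outcome $Y$ with density $p(y\mid x,a)$, and behaviour policy $\pi^b(a\mid x)>0$ for all $a,x$; let $p_\pi(x,a,y)=p(y\mid x,a)\pi(a\mid x)p(x)$ with $Y$-marginal $p_\pi(y)$, and $\pi^{(a)}(a'\mid x)=\mathbb{1}(a'=a)$. Define $\rho_{\mathrm{ATE}}(a,x)=\frac{\mathbb{1}(a=1)-\mathbb{1}(a=0)}{\pi^b(a\mid x)}$ and $w_{\mathrm{ATE}}(y)=\frac{p_{\pi^{(1)}}(y)-p_{\pi^{(0)}}(y)}{p_{\pi^b}(y)}$, and for i.i.d. $(x_i,a_i,y_i)_{i=1}^n$ from $p_{\pi^b}$ let $\widehat{\mathrm{ATE}}_{\mathrm{IPW}}=\frac1n\sum_i\rho_{\mathrm{ATE}}(a_i,x_i)y_i$ and $\widehat{\mathrm{ATE}}_{\mathrm{MR}}=\frac1n\sum_iw_{\mathrm{ATE}}(y_i)y_i$ (exact weights). Then $\mathbb{V}[\widehat{\mathrm{ATE}}_{\mathrm{MR}}]\le\mathbb{V}[\widehat{\mathrm{ATE}}_{\mathrm{IPW}}]$; specifically $$\mathbb{V}[\widehat{\mathrm{ATE}}_{\mathrm{IPW}}]-\mathbb{V}[\widehat{\mathrm{ATE}}_{\mathrm{MR}}]=\frac1n\mathbb{E}\big[\mathbb{V}[\rho_{\mathrm{ATE}}(A,X)\mid Y]\,Y^2\big]\ge0.$$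
   Context: All expectations and variances are under $p_{\pi^b}$. *)

theory Defs
  imports "HOL-Probability.Probability"
begin

text \<open>Actions A = {0,1} are encoded as bool (True = 1, False = 0).
  Samples are triples (x, a, y) :: 'x \<times> bool \<times> real.
  px: context density w.r.t. a sigma-finite measure on contexts;
  py x a y: outcome density p(y|x,a) w.r.t. Lebesgue measure;
  a policy pol a x = pi(a|x).\<close>

definition joint_dens ::
  "('x \<Rightarrow> real) \<Rightarrow> ('x \<Rightarrow> bool \<Rightarrow> real \<Rightarrow> real) \<Rightarrow> (bool \<Rightarrow> 'x \<Rightarrow> real) \<Rightarrow> 'x \<times> bool \<times> real \<Rightarrow> real"
  where "joint_dens px py pol = (\<lambda>(x, a, y). py x a y * pol a x * px x)"

definition sample_measure ::
  "'x measure \<Rightarrow> ('x \<Rightarrow> real) \<Rightarrow> ('x \<Rightarrow> bool \<Rightarrow> real \<Rightarrow> real) \<Rightarrow> (bool \<Rightarrow> 'x \<Rightarrow> real) \<Rightarrow> ('x \<times> bool \<times> real) measure"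
  where "sample_measure MX px py pol =
    density (MX \<Otimes>\<^sub>M (count_space UNIV \<Otimes>\<^sub>M lborel)) (\<lambda>\<omega>. ennreal (joint_dens px py pol \<omega>))"

definition Y_marg ::
  "'x measure \<Rightarrow> ('x \<Rightarrow> real) \<Rightarrow> ('x \<Rightarrow> bool \<Rightarrow> real \<Rightarrow> real) \<Rightarrow> (bool \<Rightarrow> 'x \<Rightarrow> real) \<Rightarrow> real \<Rightarrow> real"
  where "Y_marg MX px py pol y = (\<integral>x. (\<Sum>a\<in>UNIV. py x a y * pol a x) * px x \<partial>MX)"

definition det_policy :: "bool \<Rightarrow> bool \<Rightarrow> 'x \<Rightarrow> real"
  where "det_policy a = (\<lambda>a' x. if a' = a then 1 else 0)"

definition rho_ATE :: "(bool \<Rightarrow> 'x \<Rightarrow> real) \<Rightarrow> bool \<Rightarrow> 'x \<Rightarrow> real"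
  where "rho_ATE pib a x = ((if a then 1 else 0) - (if \<not> a then 1 else 0)) / pib a x"

definition w_ATE ::
  "'x measure \<Rightarrow> ('x \<Rightarrow> real) \<Rightarrow> ('x \<Rightarrow> bool \<Rightarrow> real \<Rightarrow> real) \<Rightarrow> (bool \<Rightarrow> 'x \<Rightarrow> real) \<Rightarrow> real \<Rightarrow> real"
  where "w_ATE MX px py pib y =
    (Y_marg MX px py (det_policy True) y - Y_marg MX px py (det_policy False) y) / Y_marg MX px py pib y"

definition ATE_IPW :: "nat \<Rightarrow> (bool \<Rightarrow> 'x \<Rightarrow> real) \<Rightarrow> (nat \<Rightarrow> 'x \<times> bool \<times> real) \<Rightarrow> real"
  where "ATE_IPW n pib s = (1 / real n) * (\<Sum>i<n. rho_ATE pib (fst (snd (s i))) (fst (s i)) * snd (snd (s i)))"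

definition ATE_MR ::
  "nat \<Rightarrow> 'x measure \<Rightarrow> ('x \<Rightarrow> real) \<Rightarrow> ('x \<Rightarrow> bool \<Rightarrow> real \<Rightarrow> real) \<Rightarrow> (bool \<Rightarrow> 'x \<Rightarrow> real) \<Rightarrow> (nat \<Rightarrow> 'x \<times> bool \<times> real) \<Rightarrow> real"
  where "ATE_MR n MX px py pib s = (1 / real n) * (\<Sum>i<n. w_ATE MX px py pib (snd (snd (s i))) * snd (snd (s i)))"

definition sigma_Y :: "('x \<times> bool \<times> real) measure \<Rightarrow> ('x \<times> bool \<times> real) measure"
  where "sigma_Y M = vimage_algebra (space M) (\<lambda>\<omega>. snd (snd \<omega>)) borel"

definition cond_var :: "'a measure \<Rightarrow> 'a measure \<Rightarrow> ('a \<Rightarrow> real) \<Rightarrow> 'a \<Rightarrow> real"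
  where "cond_var M F f = real_cond_exp M F (\<lambda>\<omega>. (f \<omega> - real_cond_exp M F f \<omega>)\<^sup>2)"

end

theory Submission
  imports Defs
begin


lemma absprod_le: "\<bar>a * b\<bar> \<le> a\<^sup>2 + b\<^sup>2" for a b :: real
proof -
  have "0 \<le> (\<bar>a\<bar> - \<bar>b\<bar>)\<^sup>2" by simp
  then have "2 * (\<bar>a\<bar> * \<bar>b\<bar>) \<le> \<bar>a\<bar>\<^sup>2 + \<bar>b\<bar>\<^sup>2" by (simp add: power2_diff)
  moreover have "0 \<le> \<bar>a\<bar> * \<bar>b\<bar>" by simp
  ultimately have "\<bar>a\<bar> * \<bar>b\<bar> \<le> \<bar>a\<bar>\<^sup>2 + \<bar>b\<bar>\<^sup>2" by linarith
  then show ?thesis by (simp add: abs_mult)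
qed

lemma abstract_part:
  fixes M F :: "'a measure" and R Y Wf :: "'a \<Rightarrow> real"
  assumes M: "prob_space M" and F: "subalgebra M F"
    and R[measurable]: "R \<in> borel_measurable M" and Y[measurable]: "Y \<in> borel_measurable F"
    and Wf[measurable]: "Wf \<in> borel_measurable F"
    and Ri: "integrable M R"
    and RY2: "integrable M (\<lambda>\<omega>. (R \<omega> * Y \<omega>)\<^sup>2)"
    and ae: "AE \<omega> in M. real_cond_exp M F R \<omega> = Wf \<omega>"
  shows "integrable M (\<lambda>\<omega>. (Wf \<omega> * Y \<omega>)\<^sup>2)"
    and "integral\<^sup>L M (\<lambda>\<omega>. Wf \<omega> * Y \<omega>) = integral\<^sup>L M (\<lambda>\<omega>. R \<omega> * Y \<omega>)"
    and "integral\<^sup>L M (\<lambda>\<omega>. (R \<omega> * Y \<omega>)\<^sup>2) - integral\<^sup>L M (\<lambda>\<omega>. (Wf \<omega> * Y \<omega>)\<^sup>2)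
         = integral\<^sup>L M (\<lambda>\<omega>. cond_var M F R \<omega> * (Y \<omega>)\<^sup>2)"
    and "integral\<^sup>L M (\<lambda>\<omega>. cond_var M F R \<omega> * (Y \<omega>)\<^sup>2) \<ge> 0"
proof -
  interpret prob_space M by (rule M)
  interpret finite_measure_subalgebra M F by unfold_locales (rule F)
  have Ym[measurable]: "Y \<in> borel_measurable M" by (rule measurable_from_subalg[OF subalg Y])
  have Wm[measurable]: "Wf \<in> borel_measurable M" by (rule measurable_from_subalg[OF subalg Wf])
  define c where "c = real_cond_exp M F R"
  have cF[measurable]: "c \<in> borel_measurable F" unfolding c_def by simp
  have cM[measurable]: "c \<in> borel_measurable M" unfolding c_def by simp
  have RYi: "integrable M (\<lambda>\<omega>. R \<omega> * Y \<omega>)"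
    by (rule square_integrable_imp_integrable[OF _ RY2]) simp
  have ae1: "AE \<omega> in M. real_cond_exp M F (\<lambda>\<omega>. Y \<omega> * R \<omega>) \<omega> = Y \<omega> * c \<omega>"
    unfolding c_def by (rule real_cond_exp_mult) (use RYi in \<open>auto simp: mult.commute\<close>)
  have e: "(\<lambda>\<omega>. Y \<omega> * R \<omega>) = (\<lambda>\<omega>. R \<omega> * Y \<omega>)" by (auto simp: mult.commute)
  have ci2: "integrable M (\<lambda>\<omega>. (real_cond_exp M F (\<lambda>\<omega>. R \<omega> * Y \<omega>) \<omega>)\<^sup>2)"
    by (rule integrable_convex_cond_exp[of "\<lambda>\<omega>. R \<omega> * Y \<omega>" UNIV _ _ power2])
       (use RYi RY2 convex_power2 in auto)
  have cY2: "integrable M (\<lambda>\<omega>. (c \<omega> * Y \<omega>)\<^sup>2)"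
    by (rule integrable_cong_AE[THEN iffD1, OF _ _ _ ci2]) (use ae1 e in \<open>auto simp: mult.commute\<close>)
  have aeW: "AE \<omega> in M. (c \<omega> * Y \<omega>) = (Wf \<omega> * Y \<omega>)" using ae unfolding c_def by auto
  show WY2: "integrable M (\<lambda>\<omega>. (Wf \<omega> * Y \<omega>)\<^sup>2)"
    by (rule integrable_cong_AE[THEN iffD1, OF _ _ _ cY2]) (use aeW in auto)
  have "integral\<^sup>L M (\<lambda>\<omega>. Wf \<omega> * Y \<omega>) = integral\<^sup>L M (\<lambda>\<omega>. real_cond_exp M F (\<lambda>\<omega>. R \<omega> * Y \<omega>) \<omega>)"
    by (rule integral_cong_AE) (use ae1 aeW e in \<open>auto simp: mult.commute\<close>)
  also have "\<dots> = integral\<^sup>L M (\<lambda>\<omega>. R \<omega> * Y \<omega>)" by (rule real_cond_exp_int(2)[OF RYi])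
  finally show "integral\<^sup>L M (\<lambda>\<omega>. Wf \<omega> * Y \<omega>) = integral\<^sup>L M (\<lambda>\<omega>. R \<omega> * Y \<omega>)" .
  define h where "h \<omega> = (R \<omega> - c \<omega>)\<^sup>2" for \<omega>
  have hM[measurable]: "h \<in> borel_measurable M" unfolding h_def by simp
  have cv: "cond_var M F R = real_cond_exp M F h" unfolding cond_var_def h_def c_def ..
  have cross: "integrable M (\<lambda>\<omega>. (R \<omega> * Y \<omega>) * (c \<omega> * Y \<omega>))"
  proof (rule Bochner_Integration.integrable_bound[of _ "\<lambda>\<omega>. (R \<omega> * Y \<omega>)\<^sup>2 + (c \<omega> * Y \<omega>)\<^sup>2"])
    show "integrable M (\<lambda>\<omega>. (R \<omega> * Y \<omega>)\<^sup>2 + (c \<omega> * Y \<omega>)\<^sup>2)" using RY2 cY2 by auto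
    show "AE x in M. norm ((R x * Y x) * (c x * Y x)) \<le> norm ((R x * Y x)\<^sup>2 + (c x * Y x)\<^sup>2)"
    proof (rule AE_I2)
      fix x
      have "\<bar>(R x * Y x) * (c x * Y x)\<bar> \<le> (R x * Y x)\<^sup>2 + (c x * Y x)\<^sup>2"
        by (rule absprod_le)
      then show "norm ((R x * Y x) * (c x * Y x)) \<le> norm ((R x * Y x)\<^sup>2 + (c x * Y x)\<^sup>2)" by simp
    qed
  qed simp
  have hY: "(\<lambda>\<omega>. (Y \<omega>)\<^sup>2 * h \<omega>) = (\<lambda>\<omega>. (R \<omega> * Y \<omega>)\<^sup>2 - 2 * ((R \<omega> * Y \<omega>) * (c \<omega> * Y \<omega>)) + (c \<omega> * Y \<omega>)\<^sup>2)"
    by (auto simp: h_def power2_eq_square algebra_simps)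
  have hYi: "integrable M (\<lambda>\<omega>. (Y \<omega>)\<^sup>2 * h \<omega>)" unfolding hY using RY2 cY2 cross by auto
  have i1: "integral\<^sup>L M (\<lambda>\<omega>. (Y \<omega>)\<^sup>2 * real_cond_exp M F h \<omega>) = integral\<^sup>L M (\<lambda>\<omega>. (Y \<omega>)\<^sup>2 * h \<omega>)"
    by (rule real_cond_exp_intg(2)) (use hYi in auto)
  have crossi: "integrable M (\<lambda>\<omega>. (c \<omega> * (Y \<omega>)\<^sup>2) * R \<omega>)"
    by (rule Bochner_Integration.integrable_cong[THEN iffD1, OF refl _ cross]) (auto simp: power2_eq_square)
  have i2: "integral\<^sup>L M (\<lambda>\<omega>. (c \<omega> * (Y \<omega>)\<^sup>2) * real_cond_exp M F R \<omega>) = integral\<^sup>L M (\<lambda>\<omega>. (c \<omega> * (Y \<omega>)\<^sup>2) * R \<omega>)"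
    by (rule real_cond_exp_intg(2)) (use crossi in auto)
  have i2': "integral\<^sup>L M (\<lambda>\<omega>. (R \<omega> * Y \<omega>) * (c \<omega> * Y \<omega>)) = integral\<^sup>L M (\<lambda>\<omega>. (c \<omega> * Y \<omega>)\<^sup>2)"
  proof -
    have "integral\<^sup>L M (\<lambda>\<omega>. (R \<omega> * Y \<omega>) * (c \<omega> * Y \<omega>)) = integral\<^sup>L M (\<lambda>\<omega>. (c \<omega> * (Y \<omega>)\<^sup>2) * R \<omega>)"
      by (rule Bochner_Integration.integral_cong) (auto simp: power2_eq_square)
    also have "\<dots> = integral\<^sup>L M (\<lambda>\<omega>. (c \<omega> * Y \<omega>)\<^sup>2)"
      using i2 unfolding c_def[symmetric] by (simp add: power2_eq_square mult.commute mult.left_commute)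
    finally show ?thesis .
  qed
  have cWeq: "integral\<^sup>L M (\<lambda>\<omega>. (c \<omega> * Y \<omega>)\<^sup>2) = integral\<^sup>L M (\<lambda>\<omega>. (Wf \<omega> * Y \<omega>)\<^sup>2)"
    by (rule integral_cong_AE) (use aeW in auto)
  have main: "integral\<^sup>L M (\<lambda>\<omega>. cond_var M F R \<omega> * (Y \<omega>)\<^sup>2) = integral\<^sup>L M (\<lambda>\<omega>. (Y \<omega>)\<^sup>2 * h \<omega>)"
    using i1 unfolding cv by (simp add: mult.commute)
  also have "\<dots> = integral\<^sup>L M (\<lambda>\<omega>. (R \<omega> * Y \<omega>)\<^sup>2) - integral\<^sup>L M (\<lambda>\<omega>. (Wf \<omega> * Y \<omega>)\<^sup>2)"
    unfolding hY using RY2 cY2 cross i2' cWeq by simp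
  finally show "integral\<^sup>L M (\<lambda>\<omega>. (R \<omega> * Y \<omega>)\<^sup>2) - integral\<^sup>L M (\<lambda>\<omega>. (Wf \<omega> * Y \<omega>)\<^sup>2)
         = integral\<^sup>L M (\<lambda>\<omega>. cond_var M F R \<omega> * (Y \<omega>)\<^sup>2)" by simp
  show "integral\<^sup>L M (\<lambda>\<omega>. cond_var M F R \<omega> * (Y \<omega>)\<^sup>2) \<ge> 0"
    unfolding main by (rule Bochner_Integration.integral_nonneg) (auto simp: h_def)
qed



lemma PiM_coord_indep:
  assumes M: "prob_space M" and I: "finite I" "I \<noteq> {}"
  shows "prob_space.indep_vars (PiM I (\<lambda>_. M)) (\<lambda>_. M) (\<lambda>i \<omega>. \<omega> i) I"
proof -
  interpret P: prob_space "PiM I (\<lambda>_. M)" using M by (intro prob_space_PiM) auto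
  have d: "distr (PiM I (\<lambda>_. M)) M (\<lambda>\<omega>. \<omega> i) = M" if "i \<in> I" for i
    using distr_PiM_component[of I "\<lambda>_. M" i] M that by auto
  have "distr (PiM I (\<lambda>_. M)) (PiM I (\<lambda>_. M)) (\<lambda>x. \<lambda>i\<in>I. x i) = distr (PiM I (\<lambda>_. M)) (PiM I (\<lambda>_. M)) (\<lambda>x. x)"
    by (rule distr_cong) (auto simp: space_PiM PiE_def extensional_restrict)
  also have "\<dots> = PiM I (\<lambda>_. M)" by simp
  also have "\<dots> = PiM I (\<lambda>i. distr (PiM I (\<lambda>_. M)) M (\<lambda>\<omega>. \<omega> i))"
    by (rule PiM_cong) (auto simp: d)
  finally show ?thesis
    by (subst P.indep_vars_iff_distr_eq_PiM') (auto simp: I)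
qed

lemma integral_PiM_coord:
  fixes g :: "_ \<Rightarrow> real"
  assumes M: "prob_space M" and i: "i \<in> I" and g: "g \<in> borel_measurable M"
  shows "integral\<^sup>L (PiM I (\<lambda>_. M)) (\<lambda>\<omega>. g (\<omega> i)) = integral\<^sup>L M g"
    and "integrable M g \<Longrightarrow> integrable (PiM I (\<lambda>_. M)) (\<lambda>\<omega>. g (\<omega> i))"
proof -
  have d: "distr (PiM I (\<lambda>_. M)) M (\<lambda>\<omega>. \<omega> i) = M"
    using distr_PiM_component[of I "\<lambda>_. M" i] M i by auto
  have m: "(\<lambda>\<omega>. \<omega> i) \<in> measurable (PiM I (\<lambda>_. M)) M" using i by measurable
  show "integral\<^sup>L (PiM I (\<lambda>_. M)) (\<lambda>\<omega>. g (\<omega> i)) = integral\<^sup>L M g"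
    using integral_distr[OF m, of g] g d by simp
  show "integrable (PiM I (\<lambda>_. M)) (\<lambda>\<omega>. g (\<omega> i))" if "integrable M g"
    using integrable_distr_eq[OF m, of g] g d that by simp
qed

lemma PiM_pair_integral:
  fixes g :: "_ \<Rightarrow> real"
  assumes M: "prob_space M" and I: "finite I" and ij: "i \<in> I" "j \<in> I" "i \<noteq> j"
    and g: "integrable M g"
  shows "integrable (PiM I (\<lambda>_. M)) (\<lambda>\<omega>. g (\<omega> i) * g (\<omega> j))"
    and "integral\<^sup>L (PiM I (\<lambda>_. M)) (\<lambda>\<omega>. g (\<omega> i) * g (\<omega> j)) = integral\<^sup>L M g * integral\<^sup>L M g"
proof -
  interpret P: prob_space "PiM I (\<lambda>_. M)" using M by (intro prob_space_PiM) auto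
  have gm[measurable]: "g \<in> borel_measurable M" using g by auto
  have ind0: "P.indep_vars (\<lambda>_. M) (\<lambda>i \<omega>. \<omega> i) I"
    using PiM_coord_indep[OF M I] ij by auto
  have ind1: "P.indep_vars (\<lambda>_. borel) (\<lambda>k \<omega>. g (\<omega> k)) I"
    by (rule P.indep_vars_compose2[OF ind0]) auto
  have ind: "P.indep_vars (\<lambda>_. borel) (\<lambda>k \<omega>. g (\<omega> k)) {i, j}"
    using P.indep_vars_subset[OF ind1] ij by auto
  have intk: "\<And>k. k \<in> {i,j} \<Longrightarrow> integrable (PiM I (\<lambda>_. M)) (\<lambda>\<omega>. g (\<omega> k))"
    using integral_PiM_coord(2)[OF M _ gm g] ij by auto
  have e: "\<And>\<omega>. (\<Prod>k\<in>{i,j}. g (\<omega> k)) = g (\<omega> i) * g (\<omega> j)" using ij by simp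
  show "integrable (PiM I (\<lambda>_. M)) (\<lambda>\<omega>. g (\<omega> i) * g (\<omega> j))"
    using P.indep_vars_integrable[OF _ ind intk] by (simp add: e)
  have "integral\<^sup>L (PiM I (\<lambda>_. M)) (\<lambda>\<omega>. g (\<omega> i) * g (\<omega> j))
      = (\<Prod>k\<in>{i,j}. integral\<^sup>L (PiM I (\<lambda>_. M)) (\<lambda>\<omega>. g (\<omega> k)))"
    using P.indep_vars_lebesgue_integral[OF _ ind intk] by (simp add: e)
  also have "\<dots> = integral\<^sup>L M g * integral\<^sup>L M g"
    using ij integral_PiM_coord(1)[OF M ij(1) gm] integral_PiM_coord(1)[OF M ij(2) gm] by simp
  finally show "integral\<^sup>L (PiM I (\<lambda>_. M)) (\<lambda>\<omega>. g (\<omega> i) * g (\<omega> j)) = integral\<^sup>L M g * integral\<^sup>L M g" .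
qed

lemma var_mean_iid:
  fixes f :: "_ \<Rightarrow> real"
  assumes M: "prob_space M" and f[measurable]: "f \<in> borel_measurable M"
    and f2: "integrable M (\<lambda>x. (f x)\<^sup>2)" and n: "n \<ge> 1"
  shows "prob_space.variance (PiM {..<n} (\<lambda>_. M)) (\<lambda>s. (1 / real n) * (\<Sum>i<n. f (s i)))
       = prob_space.variance M f / real n"
proof -
  interpret M: prob_space M by (rule M)
  let ?P = "PiM {..<n} (\<lambda>_. M)"
  interpret P: prob_space ?P using M by (intro prob_space_PiM) auto
  have fi: "integrable M f" using M.square_integrable_imp_integrable[OF f f2] .
  define \<mu> where "\<mu> = M.expectation f"
  define g where "g x = f x - \<mu>" for x
  have gm[measurable]: "g \<in> borel_measurable M" unfolding g_def by simp
  have gi: "integrable M g" unfolding g_def using fi by auto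
  have Eg: "M.expectation g = 0" unfolding g_def \<mu>_def using fi M.prob_space by simp
  have g2: "integrable M (\<lambda>x. g x * g x)"
  proof -
    have "(\<lambda>x. g x * g x) = (\<lambda>x. (f x)\<^sup>2 - 2 * \<mu> * f x + \<mu>\<^sup>2)"
      by (auto simp: g_def power2_eq_square algebra_simps)
    then show ?thesis using f2 fi by simp
  qed
  have Vg: "M.variance f = M.expectation (\<lambda>x. g x * g x)"
    by (simp add: g_def \<mu>_def power2_eq_square)
  have fiP: "\<And>i. i < n \<Longrightarrow> integrable ?P (\<lambda>s. f (s i))"
    by (rule integral_PiM_coord(2)[OF M _ f fi]) auto
  have EfP: "\<And>i. i < n \<Longrightarrow> P.expectation (\<lambda>s. f (s i)) = \<mu>"
    unfolding \<mu>_def by (rule integral_PiM_coord(1)[OF M _ f]) auto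
  have ES: "P.expectation (\<lambda>s. (1 / real n) * (\<Sum>i<n. f (s i))) = \<mu>"
  proof -
    have "P.expectation (\<lambda>s. (1 / real n) * (\<Sum>i<n. f (s i))) = (1 / real n) * P.expectation (\<lambda>s. (\<Sum>i<n. f (s i)))"
      by (rule integral_mult_right_zero)
    also have "P.expectation (\<lambda>s. (\<Sum>i<n. f (s i))) = (\<Sum>i<n. P.expectation (\<lambda>s. f (s i)))"
      by (rule Bochner_Integration.integral_sum) (use fiP in auto)
    also have "\<dots> = (\<Sum>i<n. \<mu>)" by (rule sum.cong) (use EfP in auto)
    finally show ?thesis using n by simp
  qed
  have eq1: "\<And>s. (1 / real n) * (\<Sum>i<n. f (s i)) - \<mu> = (1 / real n) * (\<Sum>i<n. g (s i))"
  proof -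
    fix s
    have "(\<Sum>i<n. g (s i)) = (\<Sum>i<n. f (s i)) - real n * \<mu>" by (simp add: g_def sum_subtractf)
    then show "(1 / real n) * (\<Sum>i<n. f (s i)) - \<mu> = (1 / real n) * (\<Sum>i<n. g (s i))"
      using n by (simp add: right_diff_distrib)
  qed
  have sq: "\<And>s. ((1 / real n) * (\<Sum>i<n. g (s i)))\<^sup>2 = (1 / real n)\<^sup>2 * (\<Sum>i<n. \<Sum>j<n. g (s i) * g (s j))"
    by (simp add: power2_eq_square sum_product)
  have pint: "\<And>i j. i < n \<Longrightarrow> j < n \<Longrightarrow> integrable ?P (\<lambda>s. g (s i) * g (s j))
     \<and> P.expectation (\<lambda>s. g (s i) * g (s j)) = (if i = j then M.variance f else 0)"
  proof -
    fix i j assume ij: "i < n" "j < n"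
    show "integrable ?P (\<lambda>s. g (s i) * g (s j))
     \<and> P.expectation (\<lambda>s. g (s i) * g (s j)) = (if i = j then M.variance f else 0)"
    proof (cases "i = j")
      case True
      have a: "integrable ?P (\<lambda>s. g (s i) * g (s i))"
        by (rule integral_PiM_coord(2)[OF M _ _ g2, of i "{..<n}"]) (use ij in auto)
      have b: "P.expectation (\<lambda>s. g (s i) * g (s i)) = M.expectation (\<lambda>x. g x * g x)"
        by (rule integral_PiM_coord(1)[OF M _ _, of i "{..<n}" "\<lambda>x. g x * g x"]) (use ij in auto)
      show ?thesis using a b Vg True by simp
    next
      case False
      have "finite {..<n}" "i \<in> {..<n}" "j \<in> {..<n}" using ij by auto
      note r = PiM_pair_integral[of M "{..<n}" i j g, OF M this False gi]
      show ?thesis using r Eg False by simp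
    qed
  qed
  have "P.variance (\<lambda>s. (1 / real n) * (\<Sum>i<n. f (s i)))
      = P.expectation (\<lambda>s. (1 / real n)\<^sup>2 * (\<Sum>i<n. \<Sum>j<n. g (s i) * g (s j)))"
    by (simp only: ES eq1 sq)
  also have "\<dots> = (1 / real n)\<^sup>2 * (\<Sum>i<n. \<Sum>j<n. P.expectation (\<lambda>s. g (s i) * g (s j)))"
  proof -
    have "P.expectation (\<lambda>s. (1 / real n)\<^sup>2 * (\<Sum>i<n. \<Sum>j<n. g (s i) * g (s j)))
       = (1 / real n)\<^sup>2 * P.expectation (\<lambda>s. (\<Sum>i<n. \<Sum>j<n. g (s i) * g (s j)))"
      by (rule integral_mult_right_zero)
    also have "P.expectation (\<lambda>s. (\<Sum>i<n. \<Sum>j<n. g (s i) * g (s j)))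
       = (\<Sum>i<n. P.expectation (\<lambda>s. \<Sum>j<n. g (s i) * g (s j)))"
      by (rule Bochner_Integration.integral_sum) (use pint in auto)
    also have "\<dots> = (\<Sum>i<n. \<Sum>j<n. P.expectation (\<lambda>s. g (s i) * g (s j)))"
      by (rule sum.cong[OF refl], rule Bochner_Integration.integral_sum) (use pint in auto)
    finally show ?thesis .
  qed
  also have "\<dots> = (1 / real n)\<^sup>2 * (\<Sum>i<n. M.variance f)"
    by (rule arg_cong[where f="\<lambda>x. (1 / real n)\<^sup>2 * x"], rule sum.cong[OF refl])
       (simp add: pint)
  also have "\<dots> = M.variance f / real n"
    using n by (simp add: power2_eq_square field_simps)
  finally show ?thesis .
qed



context
  fixes MX :: "'x measure" and px :: "'x \<Rightarrow> real"
    and py :: "'x \<Rightarrow> bool \<Rightarrow> real \<Rightarrow> real" and pib :: "bool \<Rightarrow> 'x \<Rightarrow> real"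
  assumes sf: "sigma_finite_measure MX"
    and px_meas: "px \<in> borel_measurable MX"
    and px_nonneg: "\<forall>x\<in>space MX. px x \<ge> 0"
    and px_norm: "(\<integral>\<^sup>+ x. ennreal (px x) \<partial>MX) = 1"
    and py_meas: "(\<lambda>(x, a, y). py x a y) \<in> borel_measurable (MX \<Otimes>\<^sub>M (count_space UNIV \<Otimes>\<^sub>M lborel))"
    and py_nonneg: "\<forall>x\<in>space MX. \<forall>a y. py x a y \<ge> 0"
    and py_norm: "\<forall>x\<in>space MX. \<forall>a. (\<integral>\<^sup>+ y. ennreal (py x a y) \<partial>lborel) = 1"
    and pib_meas: "\<forall>a. pib a \<in> borel_measurable MX"
    and pib_pos: "\<forall>x\<in>space MX. \<forall>a. pib a x > 0"
    and pib_sum: "\<forall>x\<in>space MX. pib True x + pib False x = 1"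
begin

interpretation MX: sigma_finite_measure MX by (rule sf)

lemma sfN2: "sigma_finite_measure (count_space (UNIV :: bool set) \<Otimes>\<^sub>M (lborel :: real measure))"
  by (rule sigma_finite_pair_measure)
     (auto intro: sigma_finite_measure_count_space_finite lborel.sigma_finite_measure_axioms)

lemma psf1: "pair_sigma_finite MX (count_space (UNIV :: bool set) \<Otimes>\<^sub>M (lborel :: real measure))"
  unfolding pair_sigma_finite_def using sf sfN2 by simp

lemma psf2: "pair_sigma_finite (count_space (UNIV :: bool set)) (lborel :: real measure)"
proof -
  interpret C: sigma_finite_measure "count_space (UNIV :: bool set)"
    by (rule sigma_finite_measure_count_space_finite) simp
  show ?thesis ..
qed

lemma psf3: "pair_sigma_finite MX (lborel :: real measure)"
  by unfold_locales

lemma pym[measurable]: "(\<lambda>\<omega>. py (fst \<omega>) (fst (snd \<omega>)) (snd (snd \<omega>))) \<in> borel_measurable (MX \<Otimes>\<^sub>M (count_space UNIV \<Otimes>\<^sub>M lborel))"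
  using py_meas by (simp add: case_prod_beta')

lemma pibm[measurable]: "pib b \<in> borel_measurable MX" using pib_meas by auto

lemma pym2[measurable]: "(\<lambda>\<omega>. py (fst \<omega>) a (snd \<omega>)) \<in> borel_measurable (MX \<Otimes>\<^sub>M lborel)"
proof -
  have m: "(\<lambda>\<omega>. (fst \<omega>, a, snd \<omega>)) \<in> measurable (MX \<Otimes>\<^sub>M lborel) (MX \<Otimes>\<^sub>M (count_space UNIV \<Otimes>\<^sub>M lborel))"
    by measurable
  show ?thesis using measurable_compose[OF m pym] by simp
qed

lemma pym3[measurable]: "(\<lambda>x. py x a y) \<in> borel_measurable MX"
proof -
  have m: "(\<lambda>x. (x, y)) \<in> measurable MX (MX \<Otimes>\<^sub>M lborel)" by measurable
  show ?thesis using measurable_compose[OF m pym2[of a]] by simp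
qed

lemma pib_nn: "x \<in> space MX \<Longrightarrow> 0 \<le> pib a x" using pib_pos by (simp add: less_imp_le)
lemma px_nn: "x \<in> space MX \<Longrightarrow> 0 \<le> px x" using px_nonneg by simp
lemma py_nn: "x \<in> space MX \<Longrightarrow> 0 \<le> py x a y" using py_nonneg by simp

lemma pym4[measurable]: "x \<in> space MX \<Longrightarrow> (\<lambda>y. py x a y) \<in> borel_measurable lborel"
  using measurable_compose[OF measurable_Pair1'[of x MX lborel] pym2[of a]] by simp

lemma pibm2[measurable]: "(\<lambda>\<omega>. pib (fst (snd \<omega>)) (fst \<omega>)) \<in> borel_measurable (MX \<Otimes>\<^sub>M (count_space UNIV \<Otimes>\<^sub>M lborel))"
proof -
  have "(\<lambda>\<omega>. pib (fst (snd \<omega>)) (fst \<omega>)) = (\<lambda>\<omega>. if fst (snd \<omega>) then pib True (fst \<omega>) else pib False (fst \<omega>))"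
    by (auto simp: fun_eq_iff)
  moreover have "(\<lambda>\<omega>. if fst (snd \<omega>) then pib True (fst \<omega>) else pib False (fst \<omega>)) \<in> borel_measurable (MX \<Otimes>\<^sub>M (count_space UNIV \<Otimes>\<^sub>M lborel))"
    by measurable
  ultimately show ?thesis by simp
qed

lemma jdm[measurable]: "joint_dens px py pib \<in> borel_measurable (MX \<Otimes>\<^sub>M (count_space UNIV \<Otimes>\<^sub>M lborel))"
proof -
  have "joint_dens px py pib = (\<lambda>\<omega>. py (fst \<omega>) (fst (snd \<omega>)) (snd (snd \<omega>)) * pib (fst (snd \<omega>)) (fst \<omega>) * px (fst \<omega>))"
    by (auto simp: joint_dens_def fun_eq_iff)
  then show ?thesis using px_meas by simp
qed

lemma sets_M: "sets (sample_measure MX px py pib) = sets (MX \<Otimes>\<^sub>M (count_space UNIV \<Otimes>\<^sub>M lborel))"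
  by (simp add: sample_measure_def)

lemma space_M: "space (sample_measure MX px py pib) = space (MX \<Otimes>\<^sub>M (count_space UNIV \<Otimes>\<^sub>M lborel))"
  by (simp add: sample_measure_def)

lemma M_nn_y:
  assumes h[measurable]: "h \<in> borel_measurable (MX \<Otimes>\<^sub>M (count_space UNIV \<Otimes>\<^sub>M lborel))"
  shows "(\<integral>\<^sup>+ \<omega>. h \<omega> \<partial>sample_measure MX px py pib)
    = (\<integral>\<^sup>+ y. (\<Sum>a\<in>UNIV. \<integral>\<^sup>+ x. ennreal (py x a y * pib a x * px x) * h (x, a, y) \<partial>MX) \<partial>lborel)"
proof -
  interpret P1: pair_sigma_finite MX "count_space (UNIV :: bool set) \<Otimes>\<^sub>M (lborel :: real measure)" by (rule psf1)
  interpret P2: pair_sigma_finite "count_space (UNIV :: bool set)" "lborel :: real measure" by (rule psf2)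
  have "(\<integral>\<^sup>+ \<omega>. h \<omega> \<partial>sample_measure MX px py pib)
      = (\<integral>\<^sup>+ \<omega>. ennreal (joint_dens px py pib \<omega>) * h \<omega> \<partial>(MX \<Otimes>\<^sub>M (count_space UNIV \<Otimes>\<^sub>M lborel)))"
    unfolding sample_measure_def by (rule nn_integral_density) auto
  also have "\<dots> = (\<integral>\<^sup>+ ay. (\<integral>\<^sup>+ x. ennreal (joint_dens px py pib (x, ay)) * h (x, ay) \<partial>MX) \<partial>(count_space UNIV \<Otimes>\<^sub>M lborel))"
    by (rule P1.nn_integral_snd[symmetric]) simp
  also have "\<dots> = (\<integral>\<^sup>+ y. (\<integral>\<^sup>+ a. (\<integral>\<^sup>+ x. ennreal (joint_dens px py pib (x, a, y)) * h (x, a, y) \<partial>MX) \<partial>count_space UNIV) \<partial>lborel)"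
  proof -
    have m: "(\<lambda>ay. \<integral>\<^sup>+ x. ennreal (joint_dens px py pib (x, ay)) * h (x, ay) \<partial>MX) \<in> borel_measurable (count_space UNIV \<Otimes>\<^sub>M lborel)"
      by (rule MX.borel_measurable_nn_integral_fst[where f="\<lambda>(ay, x). ennreal (joint_dens px py pib (x, ay)) * h (x, ay)", simplified])
         (rule measurable_pair_swap[where f="\<lambda>\<omega>. ennreal (joint_dens px py pib \<omega>) * h \<omega>", simplified], simp)
    show ?thesis using P2.nn_integral_snd[OF m] by simp
  qed
  also have "\<dots> = (\<integral>\<^sup>+ y. (\<Sum>a\<in>UNIV. \<integral>\<^sup>+ x. ennreal (py x a y * pib a x * px x) * h (x, a, y) \<partial>MX) \<partial>lborel)"
    by (simp add: nn_integral_count_space_finite joint_dens_def)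
  finally show ?thesis .
qed

lemma fub:
  assumes c[measurable]: "c \<in> borel_measurable MX" and cnn: "\<And>x. x \<in> space MX \<Longrightarrow> c x \<ge> 0"
  shows "(\<integral>\<^sup>+ y. (\<integral>\<^sup>+ x. ennreal (py x a y * c x) \<partial>MX) \<partial>lborel) = (\<integral>\<^sup>+ x. ennreal (c x) \<partial>MX)"
proof -
  interpret P3: pair_sigma_finite MX "lborel :: real measure" by (rule psf3)
  have m: "(\<lambda>(x, y). ennreal (py x a y * c x)) \<in> borel_measurable (MX \<Otimes>\<^sub>M lborel)"
  proof -
    have "(\<lambda>\<omega>. ennreal (py (fst \<omega>) a (snd \<omega>) * c (fst \<omega>))) \<in> borel_measurable (MX \<Otimes>\<^sub>M lborel)"
      by measurable
    then show ?thesis by (simp add: case_prod_beta')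
  qed
  have "(\<integral>\<^sup>+ y. (\<integral>\<^sup>+ x. ennreal (py x a y * c x) \<partial>MX) \<partial>lborel)
      = (\<integral>\<^sup>+ x. (\<integral>\<^sup>+ y. ennreal (py x a y * c x) \<partial>lborel) \<partial>MX)"
    by (rule P3.Fubini'[OF m])
  also have "\<dots> = (\<integral>\<^sup>+ x. ennreal (c x) \<partial>MX)"
  proof (rule nn_integral_cong)
    fix x assume x: "x \<in> space MX"
    have "(\<integral>\<^sup>+ y. ennreal (py x a y * c x) \<partial>lborel) = (\<integral>\<^sup>+ y. ennreal (py x a y) * ennreal (c x) \<partial>lborel)"
      using x py_nonneg cnn by (intro nn_integral_cong) (simp add: ennreal_mult)
    also have "\<dots> = (\<integral>\<^sup>+ y. ennreal (py x a y) \<partial>lborel) * ennreal (c x)"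
      using x by (intro nn_integral_multc) simp
    also have "\<dots> = ennreal (c x)" using py_norm x by simp
    finally show "(\<integral>\<^sup>+ y. ennreal (py x a y * c x) \<partial>lborel) = ennreal (c x)" .
  qed
  finally show ?thesis .
qed

definition T where "T a y = (\<integral>\<^sup>+ x. ennreal (py x a y * px x) \<partial>MX)"
definition Qb where "Qb y = (\<Sum>a\<in>UNIV. \<integral>\<^sup>+ x. ennreal (py x a y * pib a x * px x) \<partial>MX)"

lemma T_meas[measurable]: "T a \<in> borel_measurable borel"
proof -
  have m: "(\<lambda>(y, x). ennreal (py x a y * px x)) \<in> borel_measurable (lborel \<Otimes>\<^sub>M MX)"
  proof -
    have "(\<lambda>\<omega>. ennreal (py (snd \<omega>) a (fst \<omega>) * px (snd \<omega>))) \<in> borel_measurable (lborel \<Otimes>\<^sub>M MX)"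
    proof -
      have s: "(\<lambda>\<omega>. (snd \<omega>, fst \<omega>)) \<in> measurable (lborel \<Otimes>\<^sub>M MX) (MX \<Otimes>\<^sub>M lborel)" by measurable
      have "(\<lambda>\<omega>. ennreal (py (fst \<omega>) a (snd \<omega>) * px (fst \<omega>))) \<in> borel_measurable (MX \<Otimes>\<^sub>M lborel)"
        using px_meas by measurable
      from measurable_compose[OF s this] show ?thesis by simp
    qed
    then show ?thesis by (simp add: case_prod_beta')
  qed
  have "T a \<in> borel_measurable lborel"
    unfolding T_def[abs_def] using MX.borel_measurable_nn_integral[of "\<lambda>y x. ennreal (py x a y * px x)" lborel] m by simp
  then show ?thesis by simp
qed

lemma Qa_meas[measurable]: "(\<lambda>y. \<integral>\<^sup>+ x. ennreal (py x a y * pib a x * px x) \<partial>MX) \<in> borel_measurable borel"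
proof -
  have m: "(\<lambda>(y, x). ennreal (py x a y * pib a x * px x)) \<in> borel_measurable (lborel \<Otimes>\<^sub>M MX)"
  proof -
    have "(\<lambda>\<omega>. ennreal (py (snd \<omega>) a (fst \<omega>) * pib a (snd \<omega>) * px (snd \<omega>))) \<in> borel_measurable (lborel \<Otimes>\<^sub>M MX)"
    proof -
      have s: "(\<lambda>\<omega>. (snd \<omega>, fst \<omega>)) \<in> measurable (lborel \<Otimes>\<^sub>M MX) (MX \<Otimes>\<^sub>M lborel)" by measurable
      have "(\<lambda>\<omega>. ennreal (py (fst \<omega>) a (snd \<omega>) * pib a (fst \<omega>) * px (fst \<omega>))) \<in> borel_measurable (MX \<Otimes>\<^sub>M lborel)"
        using px_meas by measurable
      from measurable_compose[OF s this] show ?thesis by simp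
    qed
    then show ?thesis by (simp add: case_prod_beta')
  qed
  have "(\<lambda>y. \<integral>\<^sup>+ x. ennreal (py x a y * pib a x * px x) \<partial>MX) \<in> borel_measurable lborel"
    using MX.borel_measurable_nn_integral[of "\<lambda>y x. ennreal (py x a y * pib a x * px x)" lborel] m by simp
  then show ?thesis by simp
qed

lemma Qb_meas[measurable]: "Qb \<in> borel_measurable borel"
  unfolding Qb_def[abs_def] by measurable

lemma T_int: "(\<integral>\<^sup>+ y. T a y \<partial>lborel) = 1"
  unfolding T_def using fub[of px a] px_meas px_nonneg px_norm by simp

lemma Qb_int: "(\<integral>\<^sup>+ y. Qb y \<partial>lborel) = 1"
proof -
  have "(\<integral>\<^sup>+ y. Qb y \<partial>lborel) = (\<Sum>a\<in>UNIV. \<integral>\<^sup>+ y. (\<integral>\<^sup>+ x. ennreal (py x a y * pib a x * px x) \<partial>MX) \<partial>lborel)"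
    unfolding Qb_def by (rule nn_integral_sum) simp
  also have "\<dots> = (\<Sum>a\<in>UNIV. \<integral>\<^sup>+ x. ennreal (pib a x * px x) \<partial>MX)"
  proof (rule sum.cong[OF refl])
    fix a :: bool
    have "(\<integral>\<^sup>+ y. (\<integral>\<^sup>+ x. ennreal (py x a y * pib a x * px x) \<partial>MX) \<partial>lborel)
        = (\<integral>\<^sup>+ y. (\<integral>\<^sup>+ x. ennreal (py x a y * (pib a x * px x)) \<partial>MX) \<partial>lborel)"
      by (simp add: mult.assoc)
    also have "\<dots> = (\<integral>\<^sup>+ x. ennreal (pib a x * px x) \<partial>MX)"
    proof (rule fub)
      show "(\<lambda>x. pib a x * px x) \<in> borel_measurable MX" using px_meas by simp
      fix x assume "x \<in> space MX"
      then show "0 \<le> pib a x * px x" using pib_pos px_nonneg by (meson less_imp_le mult_nonneg_nonneg)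
    qed
    finally show "(\<integral>\<^sup>+ y. (\<integral>\<^sup>+ x. ennreal (py x a y * pib a x * px x) \<partial>MX) \<partial>lborel) = (\<integral>\<^sup>+ x. ennreal (pib a x * px x) \<partial>MX)" .
  qed
  also have "\<dots> = (\<integral>\<^sup>+ x. (\<Sum>a\<in>UNIV. ennreal (pib a x * px x)) \<partial>MX)"
    by (rule nn_integral_sum[symmetric]) (use px_meas in simp)
  also have "\<dots> = (\<integral>\<^sup>+ x. ennreal (px x) \<partial>MX)"
  proof (rule nn_integral_cong)
    fix x assume x: "x \<in> space MX"
    have "(\<Sum>a\<in>UNIV. ennreal (pib a x * px x)) = ennreal (pib True x * px x) + ennreal (pib False x * px x)"
      by (simp add: UNIV_bool)
    also have "\<dots> = ennreal (pib True x * px x + pib False x * px x)"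
      using x by (intro ennreal_plus[symmetric]) (simp_all add: pib_nn px_nn)
    also have "\<dots> = ennreal (px x)" using pib_sum x by (simp add: distrib_right[symmetric])
    finally show "(\<Sum>a\<in>UNIV. ennreal (pib a x * px x)) = ennreal (px x)" .
  qed
  also have "\<dots> = 1" by (rule px_norm)
  finally show ?thesis .
qed

lemma prob_M: "prob_space (sample_measure MX px py pib)"
proof
  have "emeasure (sample_measure MX px py pib) (space (sample_measure MX px py pib))
      = (\<integral>\<^sup>+ \<omega>. 1 \<partial>sample_measure MX px py pib)" by simp
  also have "\<dots> = (\<integral>\<^sup>+ y. (\<Sum>a\<in>UNIV. \<integral>\<^sup>+ x. ennreal (py x a y * pib a x * px x) * 1 \<partial>MX) \<partial>lborel)"
    by (rule M_nn_y) simp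
  also have "\<dots> = (\<integral>\<^sup>+ y. Qb y \<partial>lborel)" by (simp add: Qb_def)
  finally show "emeasure (sample_measure MX px py pib) (space (sample_measure MX px py pib)) = 1"
    using Qb_int by simp
qed

lemma AE_fin: "AE y in lborel. T True y \<noteq> \<infinity> \<and> T False y \<noteq> \<infinity> \<and> Qb y \<noteq> \<infinity>"
proof -
  have "AE y in lborel. T a y \<noteq> \<infinity>" for a
    by (rule nn_integral_PInf_AE) (simp_all add: T_int)
  moreover have "AE y in lborel. Qb y \<noteq> \<infinity>"
    by (rule nn_integral_PInf_AE) (simp_all add: Qb_int)
  ultimately show ?thesis by auto
qed

lemma Qb0: assumes "Qb y = 0" shows "T a y = 0"
proof -
  have "(\<integral>\<^sup>+ x. ennreal (py x a y * pib a x * px x) \<partial>MX) = 0"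
    using assms unfolding Qb_def by (cases a) (simp_all add: UNIV_bool)
  then have "AE x in MX. ennreal (py x a y * pib a x * px x) = 0"
    by (subst (asm) nn_integral_0_iff_AE) (use px_meas in simp_all)
  then have "AE x in MX. ennreal (py x a y * px x) = 0"
  proof (rule AE_mp[OF _ AE_I2[OF impI]])
    fix x assume x: "x \<in> space MX" and e: "ennreal (py x a y * pib a x * px x) = 0"
    have "py x a y * pib a x * px x \<le> 0" using e by (simp add: ennreal_eq_0_iff)
    moreover have "0 \<le> py x a y * px x" using x by (simp add: py_nn px_nn)
    moreover have "0 < pib a x" using x pib_pos by simp
    ultimately have "py x a y * px x = 0"
      by (metis mult.commute mult.left_commute mult_pos_pos le_less not_le mult_le_0_iff)
    then show "ennreal (py x a y * px x) = 0" by (simp only: ennreal_0)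
  qed
  then show ?thesis unfolding T_def
    by (subst nn_integral_0_iff_AE) (use px_meas in simp_all)
qed

lemma Ymarg_det: "Y_marg MX px py (det_policy b) y = enn2real (T b y)"
proof -
  have "Y_marg MX px py (det_policy b) y = (\<integral>x. py x b y * px x \<partial>MX)"
    unfolding Y_marg_def det_policy_def by (rule Bochner_Integration.integral_cong) (cases b, auto simp: UNIV_bool)
  also have "\<dots> = enn2real (\<integral>\<^sup>+ x. ennreal (py x b y * px x) \<partial>MX)"
    by (rule integral_eq_nn_integral) (use px_meas in \<open>auto intro!: AE_I2 simp: py_nn px_nn\<close>)
  finally show ?thesis unfolding T_def .
qed

lemma Ymarg_pib: "Y_marg MX px py pib y = enn2real (Qb y)"
proof -
  have "Y_marg MX px py pib y = enn2real (\<integral>\<^sup>+ x. ennreal ((\<Sum>a\<in>UNIV. py x a y * pib a x) * px x) \<partial>MX)"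
    unfolding Y_marg_def
    by (rule integral_eq_nn_integral) (use px_meas in \<open>auto intro!: AE_I2 simp: py_nn px_nn pib_nn UNIV_bool\<close>)
  also have "(\<integral>\<^sup>+ x. ennreal ((\<Sum>a\<in>UNIV. py x a y * pib a x) * px x) \<partial>MX)
      = (\<integral>\<^sup>+ x. (\<Sum>a\<in>UNIV. ennreal (py x a y * pib a x * px x)) \<partial>MX)"
  proof (rule nn_integral_cong)
    fix x assume x: "x \<in> space MX"
    show "ennreal ((\<Sum>a\<in>UNIV. py x a y * pib a x) * px x) = (\<Sum>a\<in>UNIV. ennreal (py x a y * pib a x * px x))"
      using x by (simp add: UNIV_bool distrib_right ennreal_plus py_nn px_nn pib_nn)
  qed
  also have "\<dots> = Qb y" unfolding Qb_def by (rule nn_integral_sum) (use px_meas in simp)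
  finally show ?thesis .
qed

definition Rb where "Rb b \<omega> = (if fst (snd \<omega>) = b then 1 / pib b (fst \<omega>) else 0)"
definition V where "V b y = enn2real (T b y) / enn2real (Qb y)"

lemma Rb_meas[measurable]: "Rb b \<in> borel_measurable (MX \<Otimes>\<^sub>M (count_space UNIV \<Otimes>\<^sub>M lborel))"
proof -
  have "Rb b = (\<lambda>\<omega>. if fst (snd \<omega>) = b then 1 / pib b (fst \<omega>) else 0)" by (simp add: Rb_def[abs_def])
  also have "\<dots> \<in> borel_measurable (MX \<Otimes>\<^sub>M (count_space UNIV \<Otimes>\<^sub>M lborel))" by measurable
  finally show ?thesis .
qed

lemma V_meas[measurable]: "V b \<in> borel_measurable borel"
  unfolding V_def[abs_def] by measurable

lemma V_nn: "0 \<le> V b y" unfolding V_def by simp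

lemma K12:
  assumes g[measurable]: "g \<in> borel_measurable borel"
  shows "(\<integral>\<^sup>+ \<omega>. g (snd (snd \<omega>)) * ennreal (Rb b \<omega>) \<partial>sample_measure MX px py pib) = (\<integral>\<^sup>+ y. g y * T b y \<partial>lborel)"
proof -
  have "(\<integral>\<^sup>+ \<omega>. g (snd (snd \<omega>)) * ennreal (Rb b \<omega>) \<partial>sample_measure MX px py pib)
    = (\<integral>\<^sup>+ y. (\<Sum>a\<in>UNIV. \<integral>\<^sup>+ x. ennreal (py x a y * pib a x * px x) * (g y * ennreal (Rb b (x, a, y))) \<partial>MX) \<partial>lborel)"
    using M_nn_y[of "\<lambda>\<omega>. g (snd (snd \<omega>)) * ennreal (Rb b \<omega>)"] by simp
  also have "\<dots> = (\<integral>\<^sup>+ y. g y * T b y \<partial>lborel)"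
  proof (rule nn_integral_cong)
    fix y :: real
    have e: "(\<integral>\<^sup>+ x. ennreal (py x a y * pib a x * px x) * (g y * ennreal (Rb b (x, a, y))) \<partial>MX)
        = (if a = b then g y * T b y else 0)" for a
    proof (cases "a = b")
      case True
      have "(\<integral>\<^sup>+ x. ennreal (py x a y * pib a x * px x) * (g y * ennreal (Rb b (x, a, y))) \<partial>MX)
          = (\<integral>\<^sup>+ x. g y * ennreal (py x b y * px x) \<partial>MX)"
      proof (rule nn_integral_cong)
        fix x assume x: "x \<in> space MX"
        have p: "0 < pib b x" using pib_pos x by simp
        have "ennreal (py x b y * pib b x * px x) * ennreal (1 / pib b x) = ennreal (py x b y * pib b x * px x * (1 / pib b x))"
          using x p by (intro ennreal_mult''[symmetric]) simp
        also have "py x b y * pib b x * px x * (1 / pib b x) = py x b y * px x" using p by simp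
        finally show "ennreal (py x a y * pib a x * px x) * (g y * ennreal (Rb b (x, a, y))) = g y * ennreal (py x b y * px x)"
          using True by (simp add: Rb_def mult_ac)
      qed
      also have "\<dots> = g y * T b y" unfolding T_def by (rule nn_integral_cmult) (use px_meas in simp)
      finally show ?thesis using True by simp
    next
      case False
      then show ?thesis by (simp add: Rb_def)
    qed
    show "(\<Sum>a\<in>UNIV. \<integral>\<^sup>+ x. ennreal (py x a y * pib a x * px x) * (g y * ennreal (Rb b (x, a, y))) \<partial>MX) = g y * T b y"
      unfolding e by simp
  qed
  finally show ?thesis .
qed

lemma QV: assumes "T b y \<noteq> \<infinity>" "Qb y \<noteq> \<infinity>" shows "Qb y * ennreal (V b y) = T b y"
proof (cases "Qb y = 0")
  case True
  then show ?thesis using Qb0[OF True] by simp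
next
  case False
  obtain q where q: "Qb y = ennreal q" "0 \<le> q" using assms(2) by (cases "Qb y") auto
  obtain t where t: "T b y = ennreal t" "0 \<le> t" using assms(1) by (cases "T b y") auto
  have qp: "q > 0" using False q by auto
  have "Qb y * ennreal (V b y) = ennreal (q * (t / q))"
  proof -
    have "Qb y * ennreal (V b y) = ennreal q * ennreal (t / q)" using q t by (simp add: V_def)
    also have "\<dots> = ennreal (q * (t / q))" using q t qp by (intro ennreal_mult[symmetric]) simp_all
    finally show ?thesis .
  qed
  also have "\<dots> = T b y" using qp t by simp
  finally show ?thesis .
qed

lemma K34:
  assumes g[measurable]: "g \<in> borel_measurable borel"
  shows "(\<integral>\<^sup>+ \<omega>. g (snd (snd \<omega>)) * ennreal (V b (snd (snd \<omega>))) \<partial>sample_measure MX px py pib) = (\<integral>\<^sup>+ y. g y * T b y \<partial>lborel)"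
proof -
  have "(\<integral>\<^sup>+ \<omega>. g (snd (snd \<omega>)) * ennreal (V b (snd (snd \<omega>))) \<partial>sample_measure MX px py pib)
    = (\<integral>\<^sup>+ y. (\<Sum>a\<in>UNIV. \<integral>\<^sup>+ x. ennreal (py x a y * pib a x * px x) * (g y * ennreal (V b y)) \<partial>MX) \<partial>lborel)"
    using M_nn_y[of "\<lambda>\<omega>. g (snd (snd \<omega>)) * ennreal (V b (snd (snd \<omega>)))"] by simp
  also have "\<dots> = (\<integral>\<^sup>+ y. g y * T b y \<partial>lborel)"
  proof (rule nn_integral_cong_AE)
    show "AE y in lborel. (\<Sum>a\<in>UNIV. \<integral>\<^sup>+ x. ennreal (py x a y * pib a x * px x) * (g y * ennreal (V b y)) \<partial>MX) = g y * T b y"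
      using AE_fin
    proof (rule AE_mp[OF _ AE_I2[OF impI]])
      fix y assume fin: "T True y \<noteq> \<infinity> \<and> T False y \<noteq> \<infinity> \<and> Qb y \<noteq> \<infinity>"
      have "(\<Sum>a\<in>UNIV. \<integral>\<^sup>+ x. ennreal (py x a y * pib a x * px x) * (g y * ennreal (V b y)) \<partial>MX)
          = (\<Sum>a\<in>UNIV. (\<integral>\<^sup>+ x. ennreal (py x a y * pib a x * px x) \<partial>MX) * (g y * ennreal (V b y)))"
        by (rule sum.cong[OF refl], rule nn_integral_multc) (use px_meas in simp)
      also have "\<dots> = Qb y * (g y * ennreal (V b y))" unfolding Qb_def by (simp add: sum_distrib_right)
      also have "\<dots> = g y * (Qb y * ennreal (V b y))" by (simp add: mult_ac)
      also have "\<dots> = g y * T b y" using QV fin by (cases b) auto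
      finally show "(\<Sum>a\<in>UNIV. \<integral>\<^sup>+ x. ennreal (py x a y * pib a x * px x) * (g y * ennreal (V b y)) \<partial>MX) = g y * T b y" .
    qed
  qed
  finally show ?thesis .
qed

abbreviation SM where "SM \<equiv> sample_measure MX px py pib"

lemma meas_SM: "f \<in> borel_measurable (MX \<Otimes>\<^sub>M (count_space UNIV \<Otimes>\<^sub>M lborel)) \<Longrightarrow> f \<in> borel_measurable SM"
  by (simp add: sample_measure_def)

lemma space_SM_fst: "\<omega> \<in> space SM \<Longrightarrow> fst \<omega> \<in> space MX"
  by (auto simp: sample_measure_def space_pair_measure)

lemma R_eq: "rho_ATE pib (fst (snd \<omega>)) (fst \<omega>) = Rb True \<omega> - Rb False \<omega>"
  by (cases "fst (snd \<omega>)") (simp_all add: rho_ATE_def Rb_def)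

lemma W_eq: "w_ATE MX px py pib y = V True y - V False y"
  by (simp add: w_ATE_def Ymarg_det Ymarg_pib V_def diff_divide_distrib)

lemma Rb_nn: "\<omega> \<in> space SM \<Longrightarrow> 0 \<le> Rb b \<omega>"
  using space_SM_fst[of \<omega>] pib_pos by (auto simp: Rb_def less_imp_le)

lemma Tind_fin: "(\<integral>\<^sup>+ y. indicator B y * T b y \<partial>lborel) < top"
proof -
  have "(\<integral>\<^sup>+ y. indicator B y * T b y \<partial>lborel) \<le> (\<integral>\<^sup>+ y. T b y \<partial>lborel)"
    by (rule nn_integral_mono) (simp split: split_indicator)
  then have "(\<integral>\<^sup>+ y. indicator B y * T b y \<partial>lborel) \<le> 1" using T_int by simp
  then show ?thesis using ennreal_one_less_top le_less_trans by blast
qed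

lemma int_Rb_ind:
  assumes B[measurable]: "B \<in> sets borel"
  shows "integrable SM (\<lambda>\<omega>. indicator B (snd (snd \<omega>)) * Rb b \<omega>)"
    and "integral\<^sup>L SM (\<lambda>\<omega>. indicator B (snd (snd \<omega>)) * Rb b \<omega>) = enn2real (\<integral>\<^sup>+ y. indicator B y * T b y \<partial>lborel)"
proof -
  have m: "(\<lambda>\<omega>. indicator B (snd (snd \<omega>)) * Rb b \<omega>) \<in> borel_measurable SM"
    by (rule meas_SM) measurable
  have nn: "AE \<omega> in SM. 0 \<le> indicator B (snd (snd \<omega>)) * Rb b \<omega>"
    by (rule AE_I2) (simp add: Rb_nn)
  have e: "(\<integral>\<^sup>+ \<omega>. ennreal (indicator B (snd (snd \<omega>)) * Rb b \<omega>) \<partial>SM) = (\<integral>\<^sup>+ y. indicator B y * T b y \<partial>lborel)"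
  proof -
    have "(\<integral>\<^sup>+ \<omega>. ennreal (indicator B (snd (snd \<omega>)) * Rb b \<omega>) \<partial>SM) = (\<integral>\<^sup>+ \<omega>. indicator B (snd (snd \<omega>)) * ennreal (Rb b \<omega>) \<partial>SM)"
      by (rule nn_integral_cong) (simp split: split_indicator)
    also have "\<dots> = (\<integral>\<^sup>+ y. indicator B y * T b y \<partial>lborel)" by (rule K12) simp
    finally show ?thesis .
  qed
  show "integrable SM (\<lambda>\<omega>. indicator B (snd (snd \<omega>)) * Rb b \<omega>)"
    by (rule integrableI_nonneg[OF m nn]) (simp add: e Tind_fin)
  show "integral\<^sup>L SM (\<lambda>\<omega>. indicator B (snd (snd \<omega>)) * Rb b \<omega>) = enn2real (\<integral>\<^sup>+ y. indicator B y * T b y \<partial>lborel)"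
    using integral_eq_nn_integral[OF m nn] e by simp
qed

lemma int_V_ind:
  assumes B[measurable]: "B \<in> sets borel"
  shows "integrable SM (\<lambda>\<omega>. indicator B (snd (snd \<omega>)) * V b (snd (snd \<omega>)))"
    and "integral\<^sup>L SM (\<lambda>\<omega>. indicator B (snd (snd \<omega>)) * V b (snd (snd \<omega>))) = enn2real (\<integral>\<^sup>+ y. indicator B y * T b y \<partial>lborel)"
proof -
  have m: "(\<lambda>\<omega>. indicator B (snd (snd \<omega>)) * V b (snd (snd \<omega>))) \<in> borel_measurable SM"
    by (rule meas_SM) measurable
  have nn: "AE \<omega> in SM. 0 \<le> indicator B (snd (snd \<omega>)) * V b (snd (snd \<omega>))"
    by (rule AE_I2) (simp add: V_nn)
  have e: "(\<integral>\<^sup>+ \<omega>. ennreal (indicator B (snd (snd \<omega>)) * V b (snd (snd \<omega>))) \<partial>SM) = (\<integral>\<^sup>+ y. indicator B y * T b y \<partial>lborel)"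
  proof -
    have "(\<integral>\<^sup>+ \<omega>. ennreal (indicator B (snd (snd \<omega>)) * V b (snd (snd \<omega>))) \<partial>SM) = (\<integral>\<^sup>+ \<omega>. indicator B (snd (snd \<omega>)) * ennreal (V b (snd (snd \<omega>))) \<partial>SM)"
      by (rule nn_integral_cong) (simp split: split_indicator)
    also have "\<dots> = (\<integral>\<^sup>+ y. indicator B y * T b y \<partial>lborel)" by (rule K34) simp
    finally show ?thesis .
  qed
  show "integrable SM (\<lambda>\<omega>. indicator B (snd (snd \<omega>)) * V b (snd (snd \<omega>)))"
    by (rule integrableI_nonneg[OF m nn]) (simp add: e Tind_fin)
  show "integral\<^sup>L SM (\<lambda>\<omega>. indicator B (snd (snd \<omega>)) * V b (snd (snd \<omega>))) = enn2real (\<integral>\<^sup>+ y. indicator B y * T b y \<partial>lborel)"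
    using integral_eq_nn_integral[OF m nn] e by simp
qed

lemma subalg_Y: "subalgebra SM (sigma_Y SM)"
proof -
  have Ym: "(\<lambda>\<omega>. snd (snd \<omega>)) \<in> borel_measurable SM" by (rule meas_SM) measurable
  have "(\<lambda>\<omega>. snd (snd \<omega>)) \<in> space SM \<rightarrow> space borel" by simp
  then have "sets (sigma_Y SM) = {(\<lambda>\<omega>. snd (snd \<omega>)) -` A \<inter> space SM | A. A \<in> sets borel}"
    unfolding sigma_Y_def by (rule sets_vimage_algebra2)
  then show ?thesis unfolding subalgebra_def using measurable_sets[OF Ym] by (auto simp: sigma_Y_def)
qed

lemma sets_Y: "A \<in> sets (sigma_Y SM) \<Longrightarrow> \<exists>B\<in>sets borel. A = (\<lambda>\<omega>. snd (snd \<omega>)) -` B \<inter> space SM"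
proof -
  have "(\<lambda>\<omega>. snd (snd \<omega>)) \<in> space SM \<rightarrow> space borel" by simp
  then have "sets (sigma_Y SM) = {(\<lambda>\<omega>. snd (snd \<omega>)) -` A \<inter> space SM | A. A \<in> sets borel}"
    unfolding sigma_Y_def by (rule sets_vimage_algebra2)
  then show "A \<in> sets (sigma_Y SM) \<Longrightarrow> ?thesis" by auto
qed

lemma Y_measF: "(\<lambda>\<omega>. snd (snd \<omega>)) \<in> borel_measurable (sigma_Y SM)"
  unfolding sigma_Y_def by (rule measurable_vimage_algebra1) simp

lemma cexp_W:
  "AE \<omega> in SM. real_cond_exp SM (sigma_Y SM) (\<lambda>\<omega>. rho_ATE pib (fst (snd \<omega>)) (fst \<omega>)) \<omega>
      = w_ATE MX px py pib (snd (snd \<omega>))"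
proof -
  interpret prob_space SM by (rule prob_M)
  interpret finite_measure_subalgebra SM "sigma_Y SM" by unfold_locales (rule subalg_Y)
  have ind1: "indicator UNIV x = (1::real)" for x :: real by simp
  have intRb: "integrable SM (Rb b)" for b
    using int_Rb_ind(1)[of UNIV b] by simp
  have intV: "integrable SM (\<lambda>\<omega>. V b (snd (snd \<omega>)))" for b
    using int_V_ind(1)[of UNIV b] by simp
  show ?thesis
  proof (rule real_cond_exp_charact)
    show "integrable SM (\<lambda>\<omega>. rho_ATE pib (fst (snd \<omega>)) (fst \<omega>))"
      unfolding R_eq using intRb by auto
    show "integrable SM (\<lambda>\<omega>. w_ATE MX px py pib (snd (snd \<omega>)))"
      unfolding W_eq using intV by auto
    have wm: "w_ATE MX px py pib \<in> borel_measurable borel"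
      unfolding W_eq[abs_def] by measurable
    show "(\<lambda>\<omega>. w_ATE MX px py pib (snd (snd \<omega>))) \<in> borel_measurable (sigma_Y SM)"
      using measurable_compose[OF Y_measF wm] by simp
    fix A assume "A \<in> sets (sigma_Y SM)"
    then obtain B where B[measurable]: "B \<in> sets borel" and A: "A = (\<lambda>\<omega>. snd (snd \<omega>)) -` B \<inter> space SM"
      using sets_Y by blast
    have "(\<integral>\<omega>\<in>A. rho_ATE pib (fst (snd \<omega>)) (fst \<omega>) \<partial>SM)
        = (\<integral>\<omega>. indicator B (snd (snd \<omega>)) * Rb True \<omega> - indicator B (snd (snd \<omega>)) * Rb False \<omega> \<partial>SM)"
      unfolding set_lebesgue_integral_def A
      by (rule Bochner_Integration.integral_cong) (auto simp: R_eq right_diff_distrib split: split_indicator)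
    also have "\<dots> = enn2real (\<integral>\<^sup>+ y. indicator B y * T True y \<partial>lborel) - enn2real (\<integral>\<^sup>+ y. indicator B y * T False y \<partial>lborel)"
      using int_Rb_ind[OF B] by simp
    also have "\<dots> = (\<integral>\<omega>. indicator B (snd (snd \<omega>)) * V True (snd (snd \<omega>)) - indicator B (snd (snd \<omega>)) * V False (snd (snd \<omega>)) \<partial>SM)"
      using int_V_ind[OF B] by simp
    also have "\<dots> = (\<integral>\<omega>\<in>A. w_ATE MX px py pib (snd (snd \<omega>)) \<partial>SM)"
      unfolding set_lebesgue_integral_def A
      by (rule Bochner_Integration.integral_cong) (auto simp: W_eq right_diff_distrib split: split_indicator)
    finally show "(\<integral>\<omega>\<in>A. rho_ATE pib (fst (snd \<omega>)) (fst \<omega>) \<partial>SM) = (\<integral>\<omega>\<in>A. w_ATE MX px py pib (snd (snd \<omega>)) \<partial>SM)" .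
  qed
qed

lemma R_meas: "(\<lambda>\<omega>. rho_ATE pib (fst (snd \<omega>)) (fst \<omega>)) \<in> borel_measurable SM"
  unfolding R_eq by (rule meas_SM) measurable

lemma R_int: "integrable SM (\<lambda>\<omega>. rho_ATE pib (fst (snd \<omega>)) (fst \<omega>))"
proof -
  have intRb: "integrable SM (Rb b)" for b
    using int_Rb_ind(1)[of UNIV b] by simp
  then show ?thesis unfolding R_eq by auto
qed

lemma W_measF: "(\<lambda>\<omega>. w_ATE MX px py pib (snd (snd \<omega>))) \<in> borel_measurable (sigma_Y SM)"
proof -
  have wm: "w_ATE MX px py pib \<in> borel_measurable borel"
    unfolding W_eq[abs_def] by measurable
  show ?thesis using measurable_compose[OF Y_measF wm] by simp
qed

end
theorem propositionA5:
  fixes MX :: "'x measure" and px :: "'x \<Rightarrow> real"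
    and py :: "'x \<Rightarrow> bool \<Rightarrow> real \<Rightarrow> real" and pib :: "bool \<Rightarrow> 'x \<Rightarrow> real" and n :: nat
  assumes sf: "sigma_finite_measure MX"
    and px_meas: "px \<in> borel_measurable MX"
    and px_nonneg: "\<forall>x\<in>space MX. px x \<ge> 0"
    and px_norm: "(\<integral>\<^sup>+ x. ennreal (px x) \<partial>MX) = 1"
    and py_meas: "(\<lambda>(x, a, y). py x a y) \<in> borel_measurable (MX \<Otimes>\<^sub>M (count_space UNIV \<Otimes>\<^sub>M lborel))"
    and py_nonneg: "\<forall>x\<in>space MX. \<forall>a y. py x a y \<ge> 0"
    and py_norm: "\<forall>x\<in>space MX. \<forall>a. (\<integral>\<^sup>+ y. ennreal (py x a y) \<partial>lborel) = 1"
    and pib_meas: "\<forall>a. pib a \<in> borel_measurable MX"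
    and pib_pos: "\<forall>x\<in>space MX. \<forall>a. pib a x > 0"
    and pib_sum: "\<forall>x\<in>space MX. pib True x + pib False x = 1"
    and second_moment: "integrable (sample_measure MX px py pib)
                          (\<lambda>(x, a, y). (rho_ATE pib a x * y)\<^sup>2)"
    and n_pos: "n \<ge> 1"
  shows
    "prob_space.variance (PiM {..<n} (\<lambda>_. sample_measure MX px py pib)) (ATE_MR n MX px py pib)
       \<le> prob_space.variance (PiM {..<n} (\<lambda>_. sample_measure MX px py pib)) (ATE_IPW n pib)
     \<and> prob_space.variance (PiM {..<n} (\<lambda>_. sample_measure MX px py pib)) (ATE_IPW n pib)
       - prob_space.variance (PiM {..<n} (\<lambda>_. sample_measure MX px py pib)) (ATE_MR n MX px py pib)
       = (1 / real n) * prob_space.expectation (sample_measure MX px py pib)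
           (\<lambda>\<omega>. cond_var (sample_measure MX px py pib) (sigma_Y (sample_measure MX px py pib))
                    (\<lambda>(x, a, y). rho_ATE pib a x) \<omega> * (snd (snd \<omega>))\<^sup>2)
     \<and> prob_space.expectation (sample_measure MX px py pib)
           (\<lambda>\<omega>. cond_var (sample_measure MX px py pib) (sigma_Y (sample_measure MX px py pib))
                    (\<lambda>(x, a, y). rho_ATE pib a x) \<omega> * (snd (snd \<omega>))\<^sup>2) \<ge> 0"
proof -
  note facts = sf px_meas px_nonneg px_norm py_meas py_nonneg py_norm pib_meas pib_pos pib_sum
  let ?M = "sample_measure MX px py pib"
  let ?F = "sigma_Y (sample_measure MX px py pib)"
  let ?P = "PiM {..<n} (\<lambda>_. sample_measure MX px py pib)"
  define R where "R \<omega> = rho_ATE pib (fst (snd \<omega>)) (fst \<omega>)" for \<omega> :: "'x \<times> bool \<times> real"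
  define Wf where "Wf \<omega> = w_ATE MX px py pib (snd (snd \<omega>))" for \<omega> :: "'x \<times> bool \<times> real"
  have prob: "prob_space ?M" by (rule prob_M[OF facts])
  interpret M: prob_space ?M by (rule prob)
  have Fsub: "subalgebra ?M ?F" by (rule subalg_Y[OF facts])
  have ae: "AE \<omega> in ?M. real_cond_exp ?M ?F R \<omega> = Wf \<omega>"
    using cexp_W[OF facts] unfolding R_def[abs_def] Wf_def by simp
  have Rmeas: "R \<in> borel_measurable ?M"
    using R_meas[OF facts] unfolding R_def[abs_def] by simp
  have Rint: "integrable ?M R"
    using R_int[OF facts] unfolding R_def[abs_def] by simp
  have YF: "(\<lambda>\<omega>. snd (snd \<omega>)) \<in> borel_measurable ?F" by (rule Y_measF[OF facts])
  have WF: "Wf \<in> borel_measurable ?F"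
    using W_measF[OF facts] unfolding Wf_def[abs_def] by simp
  have eq2: "(\<lambda>(x, a, y). (rho_ATE pib a x * y)\<^sup>2) = (\<lambda>\<omega>. (R \<omega> * snd (snd \<omega>))\<^sup>2)"
    by (auto simp: R_def fun_eq_iff)
  have RY2: "integrable ?M (\<lambda>\<omega>. (R \<omega> * snd (snd \<omega>))\<^sup>2)"
    using second_moment unfolding eq2 .
  note AP = abstract_part[OF prob Fsub Rmeas YF WF Rint RY2 ae]
  have eqR: "(\<lambda>(x, a, y). rho_ATE pib a x) = R" by (auto simp: R_def fun_eq_iff)
  have Ym: "(\<lambda>\<omega>. snd (snd \<omega>)) \<in> borel_measurable ?M"
    by (rule measurable_from_subalg[OF Fsub YF])
  have Wm: "Wf \<in> borel_measurable ?M"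
    by (rule measurable_from_subalg[OF Fsub WF])
  have f1m: "(\<lambda>\<omega>. R \<omega> * snd (snd \<omega>)) \<in> borel_measurable ?M" using Rmeas Ym by simp
  have f2m: "(\<lambda>\<omega>. Wf \<omega> * snd (snd \<omega>)) \<in> borel_measurable ?M" using Wm Ym by simp
  have f1i: "integrable ?M (\<lambda>\<omega>. R \<omega> * snd (snd \<omega>))"
    by (rule M.square_integrable_imp_integrable[OF f1m RY2])
  have f2i: "integrable ?M (\<lambda>\<omega>. Wf \<omega> * snd (snd \<omega>))"
    by (rule M.square_integrable_imp_integrable[OF f2m AP(1)])
  have ipw: "ATE_IPW n pib = (\<lambda>s. (1 / real n) * (\<Sum>i<n. R (s i) * snd (snd (s i))))"
    by (simp add: ATE_IPW_def R_def fun_eq_iff)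
  have mr: "ATE_MR n MX px py pib = (\<lambda>s. (1 / real n) * (\<Sum>i<n. Wf (s i) * snd (snd (s i))))"
    by (simp add: ATE_MR_def Wf_def fun_eq_iff)
  have V1: "prob_space.variance ?P (ATE_IPW n pib) = M.variance (\<lambda>\<omega>. R \<omega> * snd (snd \<omega>)) / real n"
    unfolding ipw by (rule var_mean_iid[OF prob f1m RY2 n_pos])
  have V2: "prob_space.variance ?P (ATE_MR n MX px py pib) = M.variance (\<lambda>\<omega>. Wf \<omega> * snd (snd \<omega>)) / real n"
    unfolding mr by (rule var_mean_iid[OF prob f2m AP(1) n_pos])
  have D: "M.variance (\<lambda>\<omega>. R \<omega> * snd (snd \<omega>)) - M.variance (\<lambda>\<omega>. Wf \<omega> * snd (snd \<omega>))
      = M.expectation (\<lambda>\<omega>. cond_var ?M ?F R \<omega> * (snd (snd \<omega>))\<^sup>2)"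
    using M.variance_eq[OF f1i RY2] M.variance_eq[OF f2i AP(1)] AP(2) AP(3) by simp
  define E where "E = M.expectation (\<lambda>\<omega>. cond_var ?M ?F R \<omega> * (snd (snd \<omega>))\<^sup>2)"
  have E0: "E \<ge> 0" unfolding E_def by (rule AP(4))
  have npos: "real n > 0" using n_pos by simp
  have diff: "prob_space.variance ?P (ATE_IPW n pib) - prob_space.variance ?P (ATE_MR n MX px py pib) = (1 / real n) * E"
    unfolding V1 V2 E_def using D by (simp add: diff_divide_distrib[symmetric])
  have le: "prob_space.variance ?P (ATE_MR n MX px py pib) \<le> prob_space.variance ?P (ATE_IPW n pib)"
    using diff E0 npos by (smt (verit) divide_nonneg_pos mult_nonneg_nonneg zero_le_divide_1_iff)
  show ?thesis
    unfolding eqR using le diff E0 unfolding E_def by simp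
qed

end
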